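(* For any forecasting system $\varphi$ and any countable set $\mathscr S$ of selection processes, there is at least one path $\omega\in\Omega$ that is $\mathscr S$-random for $\varphi$.
   Context: $\Omega=\{0,1\}^{\mathbb N}$ is the set of paths $\omega=(\omega_1,\omega_2,\dots)$, $\omega_{1:n}=(\omega_1,\dots,\omega_n)$, $\omega_{1:0}$ the empty sequence; $\mathbb S=\bigcup_{n\ge0}\{0,1\}^n$ the set of situations. A forecasting system is a map $\varphi$ from $\mathbb S$ to closed subintervals of $[0,1]$, with $\underline\varphi(s)=\min\varphi(s)$, $\overline\varphi(s)=\max\varphi(s)$. A selection process is a map $S:\mathbb S\to\{0,1\}$. For a countable set $\mathscr S$ of selection processes, $\omega$ is $\mathscr S$-random for $\varphi$ if for every $S\in\mathscr S$ with $\lim_n\sum_{k=0}^{n-1}S(\omega_{1:k})=\infty$: $\liminf_n\frac{\sum_{k=0}^{n-1}S(\omega_{1:k})[\omega_{k+1}-\underline\varphi(\omega_{1:k})]}{\sum_{k=0}^{n-1}S(\omega_{1:k})}\ge0$ and $\limsup_n\frac{\sum_{k=0}^{n-1}S(\omega_{1:k})[\omega_{k+1}-\overline\varphi(\omega_{1:k})]}{\sum_{k=0}^{n-1}S(\omega_{1:k})}\le0$. *)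

theory Defs
  imports "HOL-Analysis.Analysis"
begin

text \<open>Paths: \<open>\<omega> :: nat \<Rightarrow> bool\<close>, with \<open>\<omega> k\<close> the outcome \<open>\<omega>_{k+1}\<close> (True = 1).  The initial segment \<open>\<omega>_{1:n}\<close> is \<open>prefix \<omega> n\<close>.\<close>

type_synonym path = "nat \<Rightarrow> bool"
type_synonym situation = "bool list"

definition prefix :: "path \<Rightarrow> nat \<Rightarrow> situation" where
  "prefix \<omega> n = map \<omega> [0..<n]"

definition bit :: "bool \<Rightarrow> real" where
  "bit b = (if b then 1 else 0)"

text \<open>A forecasting system assigns to each situation a closed subinterval
  \<open>[lo s, hi s]\<close> of \<open>[0,1]\<close>; we represent it by its endpoint pair.\<close>

type_synonym forecasting_system = "situation \<Rightarrow> real \<times> real"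

definition forecasting_system :: "forecasting_system \<Rightarrow> bool" where
  "forecasting_system \<phi> \<longleftrightarrow> (\<forall>s. 0 \<le> fst (\<phi> s) \<and> fst (\<phi> s) \<le> snd (\<phi> s) \<and> snd (\<phi> s) \<le> 1)"

definition lower :: "forecasting_system \<Rightarrow> situation \<Rightarrow> real" where
  "lower \<phi> s = fst (\<phi> s)"

definition upper :: "forecasting_system \<Rightarrow> situation \<Rightarrow> real" where
  "upper \<phi> s = snd (\<phi> s)"

type_synonym selection_process = "situation \<Rightarrow> bool"

definition sel :: "selection_process \<Rightarrow> situation \<Rightarrow> real" where
  "sel S s = (if S s then 1 else 0)"

definition random_for :: "selection_process set \<Rightarrow> forecasting_system \<Rightarrow> path \<Rightarrow> bool" where
  "random_for SS \<phi> \<omega> \<longleftrightarrow>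
    (\<forall>S\<in>SS. filterlim (\<lambda>n. \<Sum>k<n. sel S (prefix \<omega> k)) at_top sequentially \<longrightarrow>
       liminf (\<lambda>n. ereal ((\<Sum>k<n. sel S (prefix \<omega> k) * (bit (\<omega> k) - lower \<phi> (prefix \<omega> k)))
                          / (\<Sum>k<n. sel S (prefix \<omega> k)))) \<ge> 0 \<and>
       limsup (\<lambda>n. ereal ((\<Sum>k<n. sel S (prefix \<omega> k) * (bit (\<omega> k) - upper \<phi> (prefix \<omega> k)))
                          / (\<Sum>k<n. sel S (prefix \<omega> k)))) \<le> 0)"

end

theory Submission
  imports Defs
begin


lemma ln_lb:
  fixes y :: real assumes "\<bar>y\<bar> \<le> 1/2" shows "y - 2*y^2 \<le> ln (1 + y)"
proof (cases "y \<ge> 0")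
  case True
  have "y - y^2 \<le> ln (1+y)" using ln_one_plus_pos_lower_bound[of y] True assms by auto
  moreover have "y^2 \<ge> 0" by simp
  ultimately show ?thesis by linarith
next
  case False
  have "- (-y) - 2*(-y)^2 \<le> ln (1 - (-y))" using ln_one_minus_pos_lower_bound[of "-y"] False assms by auto
  thus ?thesis by simp
qed

lemma prod_sum_bound:
  fixes g t :: "nat \<Rightarrow> real" and \<epsilon> B :: real
  assumes e: "\<bar>\<epsilon>\<bar> \<le> 1/2" and g: "\<And>k. \<bar>g k\<bar> \<le> 1" and gt: "\<And>k. (g k)^2 \<le> t k"
    and B: "\<And>n. (\<Prod>k<n. 1 + \<epsilon> * g k) \<le> B"
  shows "\<epsilon> * (\<Sum>k<n. g k) \<le> ln B + 2 * \<epsilon>^2 * (\<Sum>k<n. t k)"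
proof -
  have ab: "\<bar>\<epsilon> * g k\<bar> \<le> 1/2" for k
  proof -
    have "\<bar>\<epsilon> * g k\<bar> = \<bar>\<epsilon>\<bar> * \<bar>g k\<bar>" by (simp add: abs_mult)
    also have "\<dots> \<le> 1/2 * 1" by (rule mult_mono) (use e g in auto)
    finally show ?thesis by simp
  qed
  have pos: "1 + \<epsilon> * g k > 0" for k using ab[of k] by linarith
  have pp: "(\<Prod>k<n. 1 + \<epsilon> * g k) > 0" using pos by (simp add: prod_pos)
  have "(\<Sum>k<n. \<epsilon> * g k - 2 * \<epsilon>^2 * t k) \<le> (\<Sum>k<n. ln (1 + \<epsilon> * g k))"
  proof (rule sum_mono)
    fix k
    have "\<epsilon> * g k - 2*(\<epsilon> * g k)^2 \<le> ln (1 + \<epsilon> * g k)" by (rule ln_lb[OF ab])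
    moreover have "(\<epsilon> * g k)^2 \<le> \<epsilon>^2 * t k"
      using mult_left_mono[OF gt[of k], of "\<epsilon>^2"] by (simp add: power_mult_distrib)
    ultimately show "\<epsilon> * g k - 2 * \<epsilon>^2 * t k \<le> ln (1 + \<epsilon> * g k)" by linarith
  qed
  also have "\<dots> = ln (\<Prod>k<n. 1 + \<epsilon> * g k)"
    using pos by (intro ln_prod[symmetric]) (auto simp: less_le)
  also have "\<dots> \<le> ln B" using pp B[of n] by simp
  finally show ?thesis by (simp add: sum_subtractf sum_distrib_left)
qed

lemma ratio_upper:
  fixes N X :: "nat \<Rightarrow> real"
  assumes N: "filterlim N at_top sequentially"
    and b: "\<And>m::nat. m \<ge> 2 \<Longrightarrow> \<exists>C. \<forall>n. X n \<le> C + (2 / real m) * N n"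
    and e: "e > 0"
  shows "eventually (\<lambda>n. X n / N n \<le> e) sequentially"
proof -
  obtain m :: nat where m: "m \<ge> 2" "3 / real m \<le> e"
  proof -
    obtain m0 :: nat where "real m0 \<ge> 3 / e" using real_arch_simple by blast
    let ?m = "m0 + 2"
    have "3 / real ?m \<le> e" using e \<open>real m0 \<ge> 3 / e\<close>
      by (simp add: divide_le_eq field_simps)
    thus ?thesis using that[of ?m] by simp
  qed
  obtain C where C: "\<forall>n. X n \<le> C + (2 / real m) * N n" using b m by blast
  have ev: "eventually (\<lambda>n. N n \<ge> max 1 (real m * \<bar>C\<bar>)) sequentially"
    using N unfolding filterlim_at_top by blast
  show ?thesis using ev
  proof (rule eventually_mono)
    fix n assume h: "max 1 (real m * \<bar>C\<bar>) \<le> N n"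
    hence Np: "N n > 0" by linarith
    have "X n / N n \<le> (C + (2 / real m) * N n) / N n" using C Np by (simp add: divide_right_mono)
    also have "\<dots> = C / N n + 2 / real m" using Np by (simp add: field_simps)
    also have "C / N n \<le> 1 / real m"
    proof -
      have "C * real m \<le> \<bar>C\<bar> * real m" by (simp add: mult_right_mono)
      hence "C * real m \<le> N n" using h by (simp add: mult.commute)
      hence "C \<le> N n / real m" using m by (simp add: field_simps)
      thus ?thesis using Np m by (simp add: field_simps)
    qed
    finally have "X n / N n \<le> 3 / real m" by simp
    thus "X n / N n \<le> e" using m by linarith
  qed
qed



definition epsI :: "nat \<Rightarrow> real" where
  "epsI i = (if even (snd (prod_decode i)) then 1 else -1) / real (snd (prod_decode i) div 2 + 2)"
definition selI :: "selection_process set \<Rightarrow> nat \<Rightarrow> selection_process" where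
  "selI SS i = from_nat_into SS (fst (prod_decode i))"
definition wt :: "nat \<Rightarrow> real" where "wt i = (1/2)^i"

definition fac :: "selection_process set \<Rightarrow> forecasting_system \<Rightarrow> nat \<Rightarrow> situation \<Rightarrow> nat \<Rightarrow> real" where
  "fac SS \<phi> i s k = (if i \<le> k then 1 + epsI i * (sel (selI SS i) (take k s) * (bit (s!k) - lower \<phi> (take k s))) else 1)"
definition Kl :: "selection_process set \<Rightarrow> forecasting_system \<Rightarrow> nat \<Rightarrow> situation \<Rightarrow> real" where
  "Kl SS \<phi> i s = (\<Prod>k<length s. fac SS \<phi> i s k)"
definition Ml :: "selection_process set \<Rightarrow> forecasting_system \<Rightarrow> situation \<Rightarrow> real" where
  "Ml SS \<phi> s = (\<Sum>i<Suc (length s). wt i * Kl SS \<phi> i s * epsI i * sel (selI SS i) s)"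
definition ch :: "selection_process set \<Rightarrow> forecasting_system \<Rightarrow> situation \<Rightarrow> bool" where
  "ch SS \<phi> s = (Ml SS \<phi> s \<le> 0)"
fun sq :: "selection_process set \<Rightarrow> forecasting_system \<Rightarrow> nat \<Rightarrow> situation" where
  "sq SS \<phi> 0 = []"
| "sq SS \<phi> (Suc n) = sq SS \<phi> n @ [ch SS \<phi> (sq SS \<phi> n)]"
definition om :: "selection_process set \<Rightarrow> forecasting_system \<Rightarrow> path" where
  "om SS \<phi> n = ch SS \<phi> (sq SS \<phi> n)"

lemma prefix_Suc: "prefix \<omega> (Suc n) = prefix \<omega> n @ [\<omega> n]"
  by (simp add: prefix_def)
lemma length_prefix[simp]: "length (prefix \<omega> n) = n" by (simp add: prefix_def)
lemma take_prefix: "k \<le> n \<Longrightarrow> take k (prefix \<omega> n) = prefix \<omega> k"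
  by (simp add: prefix_def take_map)
lemma nth_prefix: "k < n \<Longrightarrow> prefix \<omega> n ! k = \<omega> k"
  by (simp add: prefix_def)

lemma prefix_om: "prefix (om SS \<phi>) n = sq SS \<phi> n"
  by (induction n) (auto simp: prefix_Suc om_def prefix_def)

lemma epsI_bound: "\<bar>epsI i\<bar> \<le> 1/2"
  by (simp add: epsI_def field_simps)

lemma sel01: "sel S s = 0 \<or> sel S s = 1" by (simp add: sel_def)
lemma bit01: "bit b = 0 \<or> bit b = 1" by (simp add: bit_def)

context
  fixes SS :: "selection_process set" and \<phi> :: forecasting_system assumes fs: "forecasting_system \<phi>" and cS: "countable SS"
begin

definition "\<omega> = om SS \<phi>"
definition "dd k = bit (\<omega> k) - lower \<phi> (prefix \<omega> k)"
definition "gg i k = (if i \<le> k then sel (selI SS i) (prefix \<omega> k) * dd k else 0)"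
definition "KP i n = (\<Prod>k<n. 1 + epsI i * gg i k)"
definition "FF n = (\<Sum>i<n. wt i * (KP i n - 1))"

lemma low01: "0 \<le> lower \<phi> s \<and> lower \<phi> s \<le> 1"
  using fs unfolding forecasting_system_def lower_def by (meson order_trans)

lemma dd_bound: "\<bar>dd k\<bar> \<le> 1"
  using low01[of "prefix \<omega> k"] bit01[of "\<omega> k"] unfolding dd_def by auto

lemma gg_bound: "\<bar>gg i k\<bar> \<le> 1"
  using dd_bound[of k] sel01[of "selI SS i" "prefix \<omega> k"] unfolding gg_def by auto

lemma fac_pos: "1 + epsI i * gg i k > 0"
proof -
  have "\<bar>epsI i * gg i k\<bar> \<le> 1/2 * 1"
    unfolding abs_mult by (rule mult_mono) (use epsI_bound gg_bound in auto)
  thus ?thesis by linarith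
qed

lemma KP_pos: "KP i n > 0"
  unfolding KP_def using fac_pos by (simp add: prod_pos)

lemma KP_eq: "KP i n = Kl SS \<phi> i (prefix \<omega> n)"
  unfolding KP_def Kl_def length_prefix
  by (rule prod.cong) (auto simp: fac_def gg_def take_prefix nth_prefix dd_def)

lemma KP_start: "KP n n = 1"
  unfolding KP_def by (rule prod.neutral) (auto simp: gg_def)

lemma KP_Suc: "KP i (Suc n) = KP i n * (1 + epsI i * gg i n)"
  unfolding KP_def by simp

lemma FF_Suc: "FF (Suc n) = FF n + dd n * Ml SS \<phi> (prefix \<omega> n)"
proof -
  have "FF (Suc n) = (\<Sum>i<Suc n. wt i * (KP i n - 1) + dd n * (wt i * KP i n * epsI i * sel (selI SS i) (prefix \<omega> n)))"
    unfolding FF_def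
    by (rule sum.cong) (auto simp: KP_Suc gg_def algebra_simps)
  also have "\<dots> = (\<Sum>i<Suc n. wt i * (KP i n - 1)) + dd n * Ml SS \<phi> (prefix \<omega> n)"
    by (simp add: sum.distrib Ml_def sum_distrib_left KP_eq distrib_left)
  also have "(\<Sum>i<Suc n. wt i * (KP i n - 1)) = FF n"
    by (simp add: FF_def KP_start)
  finally show ?thesis .
qed

lemma choice: "dd n * Ml SS \<phi> (prefix \<omega> n) \<le> 0"
proof -
  have o: "\<omega> n = (Ml SS \<phi> (prefix \<omega> n) \<le> 0)"
    unfolding \<omega>_def prefix_om by (simp add: om_def ch_def)
  show ?thesis
  proof (cases "Ml SS \<phi> (prefix \<omega> n) \<le> 0")
    case True
    hence "dd n \<ge> 0" using o low01[of "prefix \<omega> n"] by (simp add: dd_def bit_def)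
    thus ?thesis using True by (simp add: mult_nonneg_nonpos)
  next
    case False
    hence "dd n \<le> 0" using o low01[of "prefix \<omega> n"] by (simp add: dd_def bit_def)
    thus ?thesis using False by (simp add: mult_nonpos_nonneg)
  qed
qed

lemma FF_nonpos: "FF n \<le> 0"
proof (induction n)
  case 0 show ?case by (simp add: FF_def)
next
  case (Suc n) thus ?case using FF_Suc[of n] choice[of n] by linarith
qed

lemma wt_sum: "(\<Sum>j<n. wt j) \<le> 2"
proof -
  have "(\<Sum>j<n. wt j) = 2 * (1 - (1/2)^n)"
    unfolding wt_def by (subst geometric_sum) (simp_all add: field_simps)
  thus ?thesis by simp
qed

lemma KP_bound: "KP i n \<le> 1 + 2 * 2^i"
proof (cases "i < n")
  case False
  hence "KP i n = 1" unfolding KP_def by (intro prod.neutral) (auto simp: gg_def)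
  thus ?thesis by simp
next
  case True
  have "FF n = wt i * (KP i n - 1) + (\<Sum>j\<in>{..<n} - {i}. wt j * (KP j n - 1))"
    unfolding FF_def using True by (simp add: sum.remove)
  moreover have "(\<Sum>j\<in>{..<n} - {i}. wt j * (KP j n - 1)) \<ge> (\<Sum>j\<in>{..<n} - {i}. - wt j)"
  proof (rule sum_mono)
    fix j
    have "wt j * KP j n \<ge> 0" using KP_pos[of j n] by (simp add: wt_def)
    thus "- wt j \<le> wt j * (KP j n - 1)" by (simp add: right_diff_distrib)
  qed
  moreover have "(\<Sum>j\<in>{..<n} - {i}. wt j) \<le> (\<Sum>j<n. wt j)"
    by (rule sum_mono2) (auto simp: wt_def)
  ultimately have "wt i * (KP i n - 1) \<le> 2" using FF_nonpos[of n] wt_sum[of n]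
    by (simp add: sum_negf)
  hence "(KP i n - 1) \<le> 2 * 2^i" by (simp add: wt_def field_simps)
  thus ?thesis by simp
qed


lemma strat: "epsI i * (\<Sum>k<n. gg i k) \<le> ln (1 + 2*2^i) + 2 * (epsI i)^2 * (\<Sum>k<n. sel (selI SS i) (prefix \<omega> k))"
proof (rule prod_sum_bound)
  show "\<bar>epsI i\<bar> \<le> 1/2" by (rule epsI_bound)
  show "\<bar>gg i k\<bar> \<le> 1" for k by (rule gg_bound)
  show "(\<Prod>k<n. 1 + epsI i * gg i k) \<le> 1 + 2 * 2 ^ i" for n using KP_bound[of i n] by (simp add: KP_def)
  show "(gg i k)^2 \<le> sel (selI SS i) (prefix \<omega> k)" for k
  proof -
    have "(dd k)^2 \<le> 1" using dd_bound[of k] by (simp add: abs_square_le_1)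
    thus ?thesis using sel01[of "selI SS i" "prefix \<omega> k"] unfolding gg_def by (auto simp: power_mult_distrib)
  qed
qed

lemma diff_bound: "\<bar>(\<Sum>k<n. sel (selI SS i) (prefix \<omega> k) * dd k) - (\<Sum>k<n. gg i k)\<bar> \<le> real (min n i)"
proof (induction n)
  case 0 show ?case by simp
next
  case (Suc n)
  have t: "\<bar>sel (selI SS i) (prefix \<omega> n) * dd n - gg i n\<bar> \<le> (if n < i then 1 else 0)"
    using dd_bound[of n] sel01[of "selI SS i" "prefix \<omega> n"] unfolding gg_def by auto
  have "\<bar>(\<Sum>k<Suc n. sel (selI SS i) (prefix \<omega> k) * dd k) - (\<Sum>k<Suc n. gg i k)\<bar>
     \<le> \<bar>(\<Sum>k<n. sel (selI SS i) (prefix \<omega> k) * dd k) - (\<Sum>k<n. gg i k)\<bar> + \<bar>sel (selI SS i) (prefix \<omega> n) * dd n - gg i n\<bar>"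
    by simp
  also have "\<dots> \<le> real (min n i) + (if n < i then 1 else 0)" using Suc.IH t by linarith
  also have "\<dots> = real (min (Suc n) i)" by auto
  finally show ?case .
qed

lemma bounds:
  assumes S: "S \<in> SS" and m: "m \<ge> 2"
  shows "\<exists>C. \<forall>n. (\<Sum>k<n. sel S (prefix \<omega> k) * dd k) \<le> C + (2 / real m) * (\<Sum>k<n. sel S (prefix \<omega> k))"
    and "\<exists>C. \<forall>n. - (\<Sum>k<n. sel S (prefix \<omega> k) * dd k) \<le> C + (2 / real m) * (\<Sum>k<n. sel S (prefix \<omega> k))"
proof -
  obtain a where a: "from_nat_into SS a = S" using from_nat_into_surj[OF cS S] by blast
  define X where "X n = (\<Sum>k<n. sel S (prefix \<omega> k) * dd k)" for n
  define N where "N n = (\<Sum>k<n. sel S (prefix \<omega> k))" for n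
  have mpos: "real m > 0" using m by simp
  {
    fix b :: nat and \<sigma> :: real
    assume bm: "b div 2 + 2 = m" and sg: "\<sigma> = (if even b then 1 else -1)"
    define i where "i = prod_encode (a, b)"
    have si: "selI SS i = S" by (simp add: i_def selI_def a)
    have ei: "epsI i = \<sigma> / real m" by (simp add: i_def epsI_def sg bm[symmetric])
    define L where "L = ln (1 + 2 * 2^i :: real)"
    have st: "\<sigma> / real m * (\<Sum>k<n. gg i k) \<le> L + 2 * (\<sigma> / real m)^2 * N n" for n
      using strat[of i n] by (simp add: si ei L_def N_def)
    have df: "\<bar>X n - (\<Sum>k<n. gg i k)\<bar> \<le> real i" for n
      using diff_bound[of i n] unfolding X_def si by linarith
    have s2: "\<sigma>^2 = 1" by (simp add: sg)
    have "\<sigma> * X n \<le> (real i + real m * L) + (2 / real m) * N n" for n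
    proof -
      have "\<sigma> * (\<Sum>k<n. gg i k) \<le> real m * L + 2 / real m * N n"
      proof -
        have "real m * (\<sigma> / real m * (\<Sum>k<n. gg i k)) \<le> real m * (L + 2 * (\<sigma> / real m)^2 * N n)"
          by (rule mult_left_mono[OF st[of n]]) (use mpos in simp)
        moreover have "real m * (\<sigma> / real m * (\<Sum>k<n. gg i k)) = \<sigma> * (\<Sum>k<n. gg i k)" using mpos by simp
        moreover have "real m * (L + 2 * (\<sigma> / real m)^2 * N n) = real m * L + 2 / real m * N n"
          using mpos s2 by (simp add: field_simps power_divide power2_eq_square)
        ultimately show ?thesis by simp
      qed
      moreover have "\<sigma> * X n - \<sigma> * (\<Sum>k<n. gg i k) \<le> real i"
        using df[of n] by (cases "even b") (auto simp: sg abs_le_iff)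
      ultimately show ?thesis by linarith
    qed
    hence "\<exists>C. \<forall>n. \<sigma> * X n \<le> C + (2 / real m) * N n" by blast
  } note key = this
  show "\<exists>C. \<forall>n. (\<Sum>k<n. sel S (prefix \<omega> k) * dd k) \<le> C + (2 / real m) * (\<Sum>k<n. sel S (prefix \<omega> k))"
    using key[of "2*(m-2)" 1] m by (simp add: X_def N_def)
  show "\<exists>C. \<forall>n. - (\<Sum>k<n. sel S (prefix \<omega> k) * dd k) \<le> C + (2 / real m) * (\<Sum>k<n. sel S (prefix \<omega> k))"
    using key[of "2*(m-2)+1" "-1"] m by (simp add: X_def N_def)
qed


lemma main_random: "random_for SS \<phi> \<omega>"
  unfolding random_for_def
proof (intro ballI impI conjI)
  fix S assume S: "S \<in> SS"
  define N where "N n = (\<Sum>k<n. sel S (prefix \<omega> k))" for n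
  define X where "X n = (\<Sum>k<n. sel S (prefix \<omega> k) * (bit (\<omega> k) - lower \<phi> (prefix \<omega> k)))" for n
  define Y where "Y n = (\<Sum>k<n. sel S (prefix \<omega> k) * (bit (\<omega> k) - upper \<phi> (prefix \<omega> k)))" for n
  assume Nlim: "filterlim (\<lambda>n. \<Sum>k<n. sel S (prefix \<omega> k)) at_top sequentially"
  hence Nl: "filterlim N at_top sequentially" by (simp add: N_def[abs_def])
  have b1: "\<exists>C. \<forall>n. X n \<le> C + (2 / real m) * N n" if "m \<ge> 2" for m
    using bounds(1)[OF S that] by (simp add: X_def N_def dd_def)
  have b2: "\<exists>C. \<forall>n. (\<lambda>n. - X n) n \<le> C + (2 / real m) * N n" if "m \<ge> 2" for m
    using bounds(2)[OF S that] by (simp add: X_def N_def dd_def)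
  have YX: "Y n \<le> X n" for n
    unfolding X_def Y_def
  proof (rule sum_mono)
    fix k
    have "lower \<phi> (prefix \<omega> k) \<le> upper \<phi> (prefix \<omega> k)" using fs unfolding forecasting_system_def lower_def upper_def by blast
    thus "sel S (prefix \<omega> k) * (bit (\<omega> k) - upper \<phi> (prefix \<omega> k)) \<le> sel S (prefix \<omega> k) * (bit (\<omega> k) - lower \<phi> (prefix \<omega> k))"
      using sel01[of S "prefix \<omega> k"] by auto
  qed
  have Npos: "eventually (\<lambda>n. N n > 0) sequentially"
    using Nl unfolding filterlim_at_top_dense by blast
  have low: "ereal (- e) \<le> liminf (\<lambda>n. ereal (X n / N n))" if e: "e > 0" for e
  proof (rule Liminf_bounded)
    show "\<forall>\<^sub>F n in sequentially. ereal (- e) \<le> ereal (X n / N n)"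
      using ratio_upper[OF Nl b2 e]
    proof (rule eventually_mono)
      fix n assume "- X n / N n \<le> e"
      hence "- (X n / N n) \<le> e" by (metis minus_divide_left)
      thus "ereal (- e) \<le> ereal (X n / N n)" by simp
    qed
  qed
  have upp: "limsup (\<lambda>n. ereal (Y n / N n)) \<le> ereal e" if e: "e > 0" for e
  proof (rule Limsup_bounded)
    show "\<forall>\<^sub>F n in sequentially. ereal (Y n / N n) \<le> ereal e"
      using eventually_conj[OF ratio_upper[OF Nl b1 e] Npos]
    proof (rule eventually_mono)
      fix n assume h: "X n / N n \<le> e \<and> 0 < N n"
      have "Y n / N n \<le> X n / N n" using h YX[of n] by (simp add: divide_right_mono)
      thus "ereal (Y n / N n) \<le> ereal e" using h by simp
    qed
  qed
  have L: "0 \<le> liminf (\<lambda>n. ereal (X n / N n))"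
  proof (cases "liminf (\<lambda>n. ereal (X n / N n))")
    case (real r)
    have "0 \<le> r + e" if "e > 0" for e using low[OF that] real by simp
    hence "0 \<le> r" by (rule field_le_epsilon)
    thus ?thesis using real by simp
  next
    case PInf thus ?thesis by simp
  next
    case MInf thus ?thesis using low[of 1] by simp
  qed
  have U: "limsup (\<lambda>n. ereal (Y n / N n)) \<le> 0"
  proof (cases "limsup (\<lambda>n. ereal (Y n / N n))")
    case (real r)
    have "r \<le> 0 + e" if "e > 0" for e using upp[OF that] real by simp
    hence "r \<le> 0" by (rule field_le_epsilon)
    thus ?thesis using real by simp
  next
    case PInf thus ?thesis using upp[of 1] by simp
  next
    case MInf thus ?thesis by simp
  qed
  show "0 \<le> liminf (\<lambda>n. ereal ((\<Sum>k<n. sel S (prefix \<omega> k) * (bit (\<omega> k) - lower \<phi> (prefix \<omega> k))) / (\<Sum>k<n. sel S (prefix \<omega> k))))"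
    using L by (simp add: X_def N_def)
  show "limsup (\<lambda>n. ereal ((\<Sum>k<n. sel S (prefix \<omega> k) * (bit (\<omega> k) - upper \<phi> (prefix \<omega> k))) / (\<Sum>k<n. sel S (prefix \<omega> k)))) \<le> 0"
    using U by (simp add: Y_def N_def)
qed

end

theorem corollary25:
  fixes \<phi> :: forecasting_system and SS :: "selection_process set"
  assumes "forecasting_system \<phi>" and "countable SS"
  shows "\<exists>\<omega> :: path. random_for SS \<phi> \<omega>"
  using main_random[OF assms] by blast

end
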